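(* Let $q$ be a power of $2$, let $\alpha\in\mathbb{F}_q$ be such that $x^2+x+\alpha$ is irreducible over $\mathbb{F}_q$, and let $\beta\in\{0,\alpha\}$. Let $V$ be the $4$-dimensional symplectic space and $u=V_\beta(4)$ the linear map described in the context. Suppose $v\in V$ satisfies $v(u-1)^3\neq0$ and $(v(u-1),v(u-1)^2)\neq0$. Write $v_i=v(u-1)^{i-1}$ for $1\le i\le4$, and set $\lambda=(v_2,v_3)$ and $\mu=(v_1,v_2)$. Then $\beta=\alpha$ if and only if $x^2+x+\lambda^{-1}\mu$ is irreducible over $\mathbb{F}_q$.
   Context: $V$ has basis $e_{-3},e_{-1},e_1,e_3$ with symplectic form $(\,,\,)$ given by $(e_{-3},e_3)=(e_3,e_{-3})=1$, $(e_{-1},e_1)=(e_1,e_{-1})=1$, and all other values on pairs of basis vectors $0$. Vectors are acted on from the right. $V_\beta(4)$ is the linear map $e_{-3}\mapsto e_{-3}+e_{-1}+e_1+\beta e_3$, $e_{-1}\mapsto e_{-1}+e_1$, $e_1\mapsto e_1+e_3$, $e_3\mapsto e_3$; it preserves the symplectic form. *)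

theory Defs
  imports "HOL-Computational_Algebra.Polynomial" "HOL-Computational_Algebra.Factorial_Ring"
begin

text \<open>Vectors of V are written as coordinate tuples (a,b,c,d) meaning
  a e_{-3} + b e_{-1} + c e_1 + d e_3.\<close>

type_synonym 'a vec4 = "'a \<times> 'a \<times> 'a \<times> 'a"

definition sform :: "'a::comm_ring_1 vec4 \<Rightarrow> 'a vec4 \<Rightarrow> 'a" where
  "sform x y = (case x of (x1,x2,x3,x4) \<Rightarrow> case y of (y1,y2,y3,y4) \<Rightarrow>
      x1*y4 + x4*y1 + x2*y3 + x3*y2)"

text \<open>The map V_beta(4), acting from the right:
  e_{-3} -> e_{-3}+e_{-1}+e_1+beta e_3, e_{-1} -> e_{-1}+e_1, e_1 -> e_1+e_3, e_3 -> e_3.\<close>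
definition Vu :: "'a::comm_ring_1 \<Rightarrow> 'a vec4 \<Rightarrow> 'a vec4" where
  "Vu \<beta> x = (case x of (a,b,c,d) \<Rightarrow> (a, a + b, a + b + c, \<beta>*a + c + d))"

definition Vu_minus_1 :: "'a::comm_ring_1 \<Rightarrow> 'a vec4 \<Rightarrow> 'a vec4" where
  "Vu_minus_1 \<beta> x = (case (Vu \<beta> x, x) of ((y1,y2,y3,y4),(x1,x2,x3,x4)) \<Rightarrow>
      (y1 - x1, y2 - x2, y3 - x3, y4 - x4))"

end

theory Submission
  imports Defs
begin

lemma deg1_root:
  fixes a :: "'a::field poly"
  assumes "degree a = 1"
  shows "\<exists>x. poly a x = 0"
proof -
  have a0: "a \<noteq> 0" using assms by auto
  have c1: "coeff a 1 \<noteq> 0" using assms a0 leading_coeff_neq_0[OF a0] by simp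
  have p: "poly a x = coeff a 0 + coeff a 1 * x" for x
    by (simp add: poly_altdef assms)
  show ?thesis using c1
    by (intro exI[of _ "- coeff a 0 / coeff a 1"]) (simp add: p field_simps)
qed

lemma irr_quad_iff:
  fixes c :: "'a::field"
  shows "irreducible [:c, 1, 1:] \<longleftrightarrow> (\<forall>x. c + x + x * x \<noteq> 0)"
proof
  assume irr: "irreducible [:c, 1, 1:]"
  show "\<forall>x. c + x + x * x \<noteq> 0"
  proof (intro allI notI)
    fix r assume r: "c + r + r * r = 0"
    have "poly [:c, 1, 1:] r = 0" using r by (simp add: algebra_simps)
    then have "[:-r, 1:] dvd [:c, 1, 1:]" by (rule poly_eq_0_iff_dvd[THEN iffD1])
    then obtain q where q: "[:c, 1, 1:] = [:-r, 1:] * q" by (elim dvdE)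
    have q0: "q \<noteq> 0" using q by auto
    have "degree ([:-r, 1:] * q) = degree [:-r, 1:] + degree q"
      by (rule degree_mult_eq) (auto simp: q0)
    then have "degree [:c, 1, 1:] = degree [:-r, 1:] + degree q"
      using q by metis
    then have dq: "degree q = 1" by simp
    from irreducibleD[OF irr q] show False
      using dq q0 by (auto simp: is_unit_iff_degree)
  qed
next
  assume nr: "\<forall>x. c + x + x * x \<noteq> 0"
  show "irreducible [:c, 1, 1:]"
  proof (rule irreducibleI)
    show "[:c, 1, 1:] \<noteq> 0" by simp
    show "\<not> [:c, 1, 1:] dvd 1" by (simp add: is_unit_iff_degree)
    fix a b assume ab: "[:c, 1, 1:] = a * b"
    show "a dvd 1 \<or> b dvd 1"
    proof (rule ccontr)
      assume "\<not> (a dvd 1 \<or> b dvd 1)"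
      moreover have a0: "a \<noteq> 0" and b0: "b \<noteq> 0" using ab by auto
      ultimately have "degree a \<noteq> 0" "degree b \<noteq> 0" by (auto simp: is_unit_iff_degree)
      moreover have "degree a + degree b = 2"
      proof -
        have "degree (a * b) = 2" using ab[symmetric] by simp
        then show ?thesis using degree_mult_eq[OF a0 b0] by simp
      qed
      ultimately have "degree a = 1" by simp
      then obtain x where "poly a x = 0" using deg1_root by blast
      then have "poly [:c, 1, 1:] x = 0" using ab by simp
      then show False using nr by (auto simp: algebra_simps)
    qed
  qed
qed

lemma char2_two: "CHAR('a::field) = 2 \<Longrightarrow> (2::'a) = 0"
proof -
  assume h: "CHAR('a) = 2"
  have "of_nat CHAR('a) = (0::'a)" by (rule of_nat_CHAR)
  then show ?thesis using h by simp
qed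

theorem lemma5p3p3:
  fixes \<alpha> \<beta> :: "'a::{finite,field}" and v :: "'a vec4"
  assumes "CHAR('a) = 2"
    and "irreducible [:\<alpha>, 1, 1:]"
    and "\<beta> \<in> {0, \<alpha>}"
    and "(Vu_minus_1 \<beta> ^^ 3) v \<noteq> (0, 0, 0, 0)"
    and "sform (Vu_minus_1 \<beta> v) ((Vu_minus_1 \<beta> ^^ 2) v) \<noteq> 0"
  shows "\<beta> = \<alpha> \<longleftrightarrow>
    (let v1 = v; v2 = Vu_minus_1 \<beta> v; v3 = (Vu_minus_1 \<beta> ^^ 2) v;
         lam = sform v2 v3; mu = sform v1 v2
     in irreducible [:inverse lam * mu, 1, 1:])"
proof -
  have two: "(2::'a) = 0" using char2_two assms(1) by blast
  have dbl: "\<And>x::'a. x + x = 0"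
  proof -
    fix x :: 'a
    have "x + x = 2 * x" by simp
    then show "x + x = 0" using two by simp
  qed
  obtain a b c d where v: "v = (a, b, c, d)" by (cases v) auto
  have v2: "Vu_minus_1 \<beta> v = (0, a, a + b, \<beta> * a + c)"
    by (simp add: v Vu_minus_1_def Vu_def)
  have v3: "(Vu_minus_1 \<beta> ^^ 2) v = (0, 0, a, a + b)"
    by (simp add: v Vu_minus_1_def Vu_def numeral_2_eq_2)
  have v4: "(Vu_minus_1 \<beta> ^^ 3) v = (0, 0, 0, a)"
    by (simp add: v Vu_minus_1_def Vu_def numeral_3_eq_3)
  have a0: "a \<noteq> 0" using assms(4) v4 by simp
  define t where "t = b / a"
  have lam: "sform (Vu_minus_1 \<beta> v) ((Vu_minus_1 \<beta> ^^ 2) v) = a * a"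
    by (simp add: v2 v3 sform_def)
  have mu: "sform v (Vu_minus_1 \<beta> v) = \<beta> * a * a + a * b + b * b"
  proof -
    have "sform v (Vu_minus_1 \<beta> v) = a * (\<beta> * a + c) + b * (a + b) + c * a"
      unfolding v2 unfolding v sform_def by simp
    also have "\<dots> = \<beta> * a * a + a * b + b * b + (a * c + a * c)"
      by (simp add: algebra_simps)
    finally show ?thesis using dbl by simp
  qed
  have key: "inverse (a * a) * (\<beta> * a * a + a * b + b * b) = \<beta> + t + t * t"
    using a0 by (simp add: t_def field_simps)
  have roots: "(\<forall>x. (\<beta> + t + t * t) + x + x * x \<noteq> 0) \<longleftrightarrow> (\<forall>x. \<beta> + x + x * x \<noteq> 0)"
  proof -
    have e: "(\<beta> + t + t * t) + x + x * x = \<beta> + (x + t) + (x + t) * (x + t)" for x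
    proof -
      have "\<beta> + (x + t) + (x + t) * (x + t) = (\<beta> + t + t * t) + x + x * x + (x * t + x * t)"
        by (simp add: algebra_simps)
      then show ?thesis using dbl by simp
    qed
    show ?thesis
    proof
      assume h: "\<forall>x. \<beta> + t + t * t + x + x * x \<noteq> 0"
      show "\<forall>x. \<beta> + x + x * x \<noteq> 0"
      proof
        fix y
        have "\<beta> + ((y - t) + t) + ((y - t) + t) * ((y - t) + t) \<noteq> 0"
          using h e[of "y - t"] by metis
        then show "\<beta> + y + y * y \<noteq> 0" by simp
      qed
    next
      assume h: "\<forall>x. \<beta> + x + x * x \<noteq> 0"
      show "\<forall>x. \<beta> + t + t * t + x + x * x \<noteq> 0"
      proof
        fix x show "\<beta> + t + t * t + x + x * x \<noteq> 0"
          unfolding e[of x] using h by blast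
      qed
    qed
  qed
  have irrb: "irreducible [:\<beta>, 1, 1:] \<longleftrightarrow> \<beta> = \<alpha>"
  proof (cases "\<beta> = \<alpha>")
    case True then show ?thesis using assms(2) by simp
  next
    case False
    then have "\<beta> = 0" using assms(3) by auto
    then have "\<beta> + 0 + 0 * 0 = 0" by simp
    then have "\<not> irreducible [:\<beta>, 1, 1:]" using irr_quad_iff[of \<beta>] by blast
    then show ?thesis using False by simp
  qed
  show ?thesis
    unfolding Let_def lam mu key
    using irr_quad_iff[of "\<beta> + t + t * t"] irr_quad_iff[of \<beta>] roots irrb by simp
qed

end
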